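(* Let $K>0$, $K\neq 1$, and let \[ A_2=\begin{pmatrix} K & 1 & 1\\ 1 & 1 & 1\\ 1 & 1 & 1\end{pmatrix},\qquad A_3=\begin{pmatrix} 1 & 1 & 1\\ 1 & K & K\\ 1 & K & K\end{pmatrix}. \] Then $A_2$ and $A_3$ have the same Sinkhorn limit \[ S(A_2)=S(A_3)=\begin{pmatrix} a & b & b\\ b & c & c\\ b & c & c\end{pmatrix} \] with \[ a=\frac{2K+1-\sqrt{8K+1}}{2(K-1)},\qquad b=\frac{-3+\sqrt{8K+1}}{4(K-1)},\qquad c=\frac{4K-1-\sqrt{8K+1}}{8(K-1)}. \]
   Context: For a positive $n\times n$ matrix $A$, the Sinkhorn limit $S(A)$ is the unique doubly stochastic matrix of the form $XAY$ with $X,Y$ positive diagonal matrices; it is the limit of alternately row scaling (dividing each row by its row sum) and column scaling (dividing each column by its column sum) starting from $A$. For a positive symmetric matrix $A$ there is a unique positive diagonal $X$ with $S(A)=XAX$. Both matrices are of the block form with first $k=1$ row $(M,B,B)$ and last $\ell=2$ rows $(B,N,N)$ with $MN/B^2=K$; the Sinkhorn limit of such a matrix depends only on $MN/B^2$. *)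

theory Defs
  imports Complex_Main
begin

text \<open>n x n real matrices are represented as functions nat => nat => real,
  with indices 0..n-1; entries outside the index range are irrelevant for
  the input, and the Sinkhorn limit is normalised to be 0 there.\<close>

definition doubly_stochastic :: "nat \<Rightarrow> (nat \<Rightarrow> nat \<Rightarrow> real) \<Rightarrow> bool" where
  "doubly_stochastic n D \<longleftrightarrow>
     (\<forall>i<n. \<forall>j<n. 0 \<le> D i j) \<and>
     (\<forall>i<n. (\<Sum>j<n. D i j) = 1) \<and>
     (\<forall>j<n. (\<Sum>i<n. D i j) = 1)"

definition diag_scaled :: "nat \<Rightarrow> (nat \<Rightarrow> nat \<Rightarrow> real) \<Rightarrow> (nat \<Rightarrow> nat \<Rightarrow> real) \<Rightarrow> bool" where
  "diag_scaled n A D \<longleftrightarrow>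
     (\<exists>x y :: nat \<Rightarrow> real. (\<forall>i<n. 0 < x i) \<and> (\<forall>j<n. 0 < y j) \<and>
        (\<forall>i<n. \<forall>j<n. D i j = x i * A i j * y j))"

definition sinkhorn_limit :: "nat \<Rightarrow> (nat \<Rightarrow> nat \<Rightarrow> real) \<Rightarrow> (nat \<Rightarrow> nat \<Rightarrow> real)" where
  "sinkhorn_limit n A = (THE D. doubly_stochastic n D \<and> diag_scaled n A D \<and>
       (\<forall>i j. (n \<le> i \<or> n \<le> j) \<longrightarrow> D i j = 0))"

end

theory Submission
  imports Defs
begin

lemma uniq_ds:
  fixes n :: nat and A D E :: "nat \<Rightarrow> nat \<Rightarrow> real"
  assumes n: "0 < n" and Apos: "\<forall>i<n. \<forall>j<n. 0 < A i j"
    and dD: "doubly_stochastic n D" and sD: "diag_scaled n A D"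
    and dE: "doubly_stochastic n E" and sE: "diag_scaled n A E"
    and i: "i < n" and j: "j < n"
  shows "E i j = D i j"
proof -
  obtain x y where xp: "\<forall>i<n. 0 < x i" and yp: "\<forall>j<n. 0 < y j"
    and Dx: "\<forall>i<n. \<forall>j<n. D i j = x i * A i j * y j" using sD unfolding diag_scaled_def by blast
  obtain x' y' where xp': "\<forall>i<n. 0 < x' i" and yp': "\<forall>j<n. 0 < y' j"
    and Ex: "\<forall>i<n. \<forall>j<n. E i j = x' i * A i j * y' j" using sE unfolding diag_scaled_def by blast
  define u where "u i = x' i / x i" for i
  define v where "v j = y' j / y j" for j
  have up: "0 < u i" if "i < n" for i using xp xp' that by (simp add: u_def)
  have vp: "0 < v j" if "j < n" for j using yp yp' that by (simp add: v_def)
  have Dp: "0 < D i j" if "i < n" "j < n" for i j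
    using Dx xp yp Apos that by simp
  have EuD: "E i j = u i * D i j * v j" if "i < n" "j < n" for i j
  proof -
    have "x i > 0" "y j > 0" using xp yp that by auto
    then show ?thesis using Dx Ex that by (simp add: u_def v_def field_simps)
  qed
  have row: "(\<Sum>j<n. D i j * v j) = 1 / u i" if "i < n" for i
  proof -
    have "1 = (\<Sum>j<n. E i j)" using dE that unfolding doubly_stochastic_def by simp
    also have "\<dots> = u i * (\<Sum>j<n. D i j * v j)"
      by (simp add: sum_distrib_left EuD that mult.assoc)
    finally show ?thesis using up[OF that] by (simp add: field_simps)
  qed
  have col: "(\<Sum>i<n. u i * D i j) = 1 / v j" if "j < n" for j
  proof -
    have "1 = (\<Sum>i<n. E i j)" using dE that unfolding doubly_stochastic_def by simp
    also have "\<dots> = (\<Sum>i<n. u i * D i j) * v j"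
      by (simp add: sum_distrib_right EuD that)
    finally show ?thesis using vp[OF that] by (simp add: field_simps)
  qed
  obtain i0 where i0: "i0 < n" "\<forall>i<n. u i0 \<le> u i"
  proof -
    have "finite (u ` {..<n})" "u ` {..<n} \<noteq> {}" using n by auto
    then have "Min (u ` {..<n}) \<in> u ` {..<n}" by (rule Min_in)
    then obtain i0 where "i0 < n" "u i0 = Min (u ` {..<n})" by auto
    then show ?thesis using that by (metis Min_le finite_imageI finite_lessThan image_eqI lessThan_iff)
  qed
  obtain j1 where j1: "j1 < n" "\<forall>j<n. v j \<le> v j1"
  proof -
    have "finite (v ` {..<n})" "v ` {..<n} \<noteq> {}" using n by auto
    then have "Max (v ` {..<n}) \<in> v ` {..<n}" by (rule Max_in)
    then obtain j1 where "j1 < n" "v j1 = Max (v ` {..<n})" by auto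
    then show ?thesis using that by (metis Max_ge finite_imageI finite_lessThan image_eqI lessThan_iff)
  qed
  have cs: "(\<Sum>i<n. D i j1) = 1" using dD j1 unfolding doubly_stochastic_def by simp
  have rs: "(\<Sum>j<n. D i0 j) = 1" using dD i0 unfolding doubly_stochastic_def by simp
  have "u i0 = (\<Sum>i<n. u i0 * D i j1)" using cs by (simp add: sum_distrib_left[symmetric])
  also have "\<dots> \<le> (\<Sum>i<n. u i * D i j1)"
    by (rule sum_mono) (use i0 Dp j1 in \<open>auto intro: mult_right_mono less_imp_le\<close>)
  also have "\<dots> = 1 / v j1" using col j1 by simp
  finally have h1: "u i0 * v j1 \<le> 1" using vp[OF j1(1)] by (simp add: field_simps)
  have "1 / u i0 = (\<Sum>j<n. D i0 j * v j)" using row i0 by simp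
  also have "\<dots> \<le> (\<Sum>j<n. D i0 j * v j1)"
    by (rule sum_mono) (use j1 Dp i0 in \<open>auto intro: mult_left_mono less_imp_le\<close>)
  also have "\<dots> = v j1" using rs by (simp add: sum_distrib_right[symmetric])
  finally have h2: "1 \<le> u i0 * v j1" using up[OF i0(1)] by (simp add: field_simps)
  have "(\<Sum>j<n. D i0 j * (v j1 - v j)) = (\<Sum>j<n. D i0 j * v j1) - (\<Sum>j<n. D i0 j * v j)"
    by (simp add: right_diff_distrib sum_subtractf)
  also have "\<dots> = v j1 - 1 / u i0" using rs row i0 by (simp add: sum_distrib_right[symmetric])
  also have "\<dots> = 0" using h1 h2 up[OF i0(1)] by (simp add: field_simps)
  finally have z: "(\<Sum>j<n. D i0 j * (v j1 - v j)) = 0" .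
  have nn: "\<forall>j\<in>{..<n}. 0 \<le> D i0 j * (v j1 - v j)"
  proof
    fix j assume "j \<in> {..<n}"
    then have "0 < D i0 j" "v j \<le> v j1" using Dp i0 j1 by auto
    then show "0 \<le> D i0 j * (v j1 - v j)" by simp
  qed
  have vc: "v j = v j1" if "j < n" for j
  proof -
    have "D i0 j * (v j1 - v j) = 0" proof -
      have "\<forall>x\<in>{..<n}. D i0 x * (v j1 - v x) = 0"
        using sum_nonneg_eq_0_iff[OF finite_lessThan, where f="\<lambda>x. D i0 x * (v j1 - v x)"] z nn by blast
      then show ?thesis using that by blast
    qed
    then show ?thesis using Dp[OF i0(1) that] by simp
  qed
  have "(\<Sum>j<n. D i j * v j) = v j1" using vc rs dD i
    unfolding doubly_stochastic_def by (simp add: sum_distrib_right[symmetric])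
  then have "u i * v j1 = 1" using row[OF i] up[OF i] by (simp add: field_simps)
  then show ?thesis using EuD[OF i j] vc[OF j] by (simp add: algebra_simps)
qed

lemma sinkhorn_eq:
  assumes n: "0 < n" and Apos: "\<forall>i<n. \<forall>j<n. 0 < A i j"
    and dD: "doubly_stochastic n D" and sD: "diag_scaled n A D"
    and zD: "\<forall>i j. (n \<le> i \<or> n \<le> j) \<longrightarrow> D i j = 0"
  shows "sinkhorn_limit n A = D"
  unfolding sinkhorn_limit_def
proof (rule the_equality)
  show "doubly_stochastic n D \<and> diag_scaled n A D \<and> (\<forall>i j. (n \<le> i \<or> n \<le> j) \<longrightarrow> D i j = 0)"
    using dD sD zD by blast
next
  fix E assume E: "doubly_stochastic n E \<and> diag_scaled n A E \<and> (\<forall>i j. (n \<le> i \<or> n \<le> j) \<longrightarrow> E i j = 0)"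
  show "E = D"
  proof (rule ext, rule ext)
    fix i j
    show "E i j = D i j"
    proof (cases "i < n \<and> j < n")
      case True
      then show ?thesis using uniq_ds[OF n Apos dD sD] E by blast
    next
      case False
      then show ?thesis using E zD by (auto simp: not_less)
    qed
  qed
qed

lemma sum3: "(\<Sum>j<(3::nat). f j) = f 0 + f 1 + (f 2 :: real)"
  by (simp add: eval_nat_numeral)

theorem mainTheorem8:
  fixes K :: real
  assumes "0 < K" and "K \<noteq> 1"
  defines "a \<equiv> (2*K + 1 - sqrt (8*K + 1)) / (2*(K - 1))"
      and "b \<equiv> (-3 + sqrt (8*K + 1)) / (4*(K - 1))"
      and "c \<equiv> (4*K - 1 - sqrt (8*K + 1)) / (8*(K - 1))"
  shows "sinkhorn_limit 3 (\<lambda>i j. if i = 0 \<and> j = 0 then K else 1) =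
           (\<lambda>i j. if 3 \<le> i \<or> 3 \<le> j then 0
                  else if i = 0 \<and> j = 0 then a else if i = 0 \<or> j = 0 then b else c)
       \<and> sinkhorn_limit 3 (\<lambda>i j. if i = 0 \<or> j = 0 then 1 else K) =
           (\<lambda>i j. if 3 \<le> i \<or> 3 \<le> j then 0
                  else if i = 0 \<and> j = 0 then a else if i = 0 \<or> j = 0 then b else c)"
proof -
  define s where "s = sqrt (8*K + 1)"
  have s2: "s^2 = 8*K+1" using assms(1) by (simp add: s_def)
  have s1: "s > 1" using assms(1) by (simp add: s_def)
  have s3: "s \<noteq> 3" using assms(2) s2 by auto
  have K: "K = (s^2 - 1)/8" using s2 by simp
  have s3': "s - 3 \<noteq> 0" using s3 by simp
  have e1: "2*K+1-s = (s-1)*(s-3)/4" unfolding K by (simp add: field_simps power2_eq_square)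
  have e2: "2*(K-1) = (s+3)*(s-3)/4" unfolding K by (simp add: field_simps power2_eq_square)
  have e3: "4*(K-1) = (s+3)*(s-3)/2" unfolding K by (simp add: field_simps power2_eq_square)
  have e4: "4*K-1-s = (s+1)*(s-3)/2" unfolding K by (simp add: field_simps power2_eq_square)
  have e5: "8*(K-1) = (s+3)*(s-3)" unfolding K by (simp add: field_simps power2_eq_square)
  have a: "a = (s-1)/(s+3)" apply (simp only: a_def s_def[symmetric] e1 e2)
    using s3' s1 by (simp add: divide_simps; simp add: algebra_simps)
  have b: "b = 2/(s+3)" apply (simp only: b_def s_def[symmetric] e3)
    using s3' s1 by (simp add: divide_simps; simp add: algebra_simps)
  have c: "c = (s+1)/(2*(s+3))" apply (simp only: c_def s_def[symmetric] e4 e5)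
    using s3' s1 by (simp add: divide_simps; simp add: algebra_simps)
  have s3p: "s + 3 \<noteq> 0" using s1 by simp
  have s3q: "s * s + (9 + s * 6) \<noteq> 0"
  proof -
    have "s * s > 0" using s1 by simp
    then show ?thesis using s1 by linarith
  qed
  have ap: "a > 0" "b > 0" "c > 0" using a b c s1 by auto
  have r1: "a + 2*b = 1" unfolding a b using s3p s3q by (simp add: field_simps)
  have r2: "b + 2*c = 1" unfolding b c using s3p s3q by (simp add: field_simps)
  have kb: "K * b^2 = a * c" unfolding a b c K using s3p s3q
    by (simp add: field_simps power2_eq_square)
  define D where "D = (\<lambda>(i::nat) (j::nat). if 3 \<le> i \<or> 3 \<le> j then 0
                  else if i = 0 \<and> j = 0 then a else if i = 0 \<or> j = 0 then b else c)"
  have dsD: "doubly_stochastic 3 D"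
    unfolding doubly_stochastic_def D_def sum3 using ap r1 r2
    by (auto simp: less_Suc_eq numeral_eq_Suc)
  have zD: "\<forall>i j. (3 \<le> i \<or> 3 \<le> j) \<longrightarrow> D i j = 0" by (simp add: D_def)
  have sc2: "diag_scaled 3 (\<lambda>i j. if i = 0 \<and> j = 0 then K else 1) D"
    unfolding diag_scaled_def
  proof (intro exI conjI)
    let ?x = "\<lambda>i::nat. if i = 0 then a / (K*b) else 1"
    let ?y = "\<lambda>j::nat. if j = 0 then b else c"
    show "\<forall>i<3. 0 < ?x i" using ap assms(1) by auto
    show "\<forall>j<3. 0 < ?y j" using ap by auto
    have e: "a / (K*b) * c = b" using kb ap assms(1) by (simp add: field_simps power2_eq_square)
    show "\<forall>i<3. \<forall>j<3. D i j = ?x i * (if i = 0 \<and> j = 0 then K else 1) * ?y j"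
      using ap assms(1) e by (auto simp: D_def)
  qed
  have sc3: "diag_scaled 3 (\<lambda>i j. if i = 0 \<or> j = 0 then 1 else K) D"
    unfolding diag_scaled_def
  proof (intro exI conjI)
    let ?x = "\<lambda>i::nat. if i = 0 then 1 else b / a"
    let ?y = "\<lambda>j::nat. if j = 0 then a else b"
    show "\<forall>i<3. 0 < ?x i" using ap by auto
    show "\<forall>j<3. 0 < ?y j" using ap by auto
    have e: "b / a * K * b = c" using kb ap by (simp add: field_simps power2_eq_square)
    show "\<forall>i<3. \<forall>j<3. D i j = ?x i * (if i = 0 \<or> j = 0 then 1 else K) * ?y j"
      using ap e by (auto simp: D_def)
  qed
  have p2: "\<forall>i<3. \<forall>j<3. 0 < (\<lambda>i j::nat. if i = 0 \<and> j = 0 then K else 1) i j" using assms(1) by auto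
  have p3: "\<forall>i<3. \<forall>j<3. 0 < (\<lambda>i j::nat. if i = 0 \<or> j = 0 then 1 else K) i j" using assms(1) by auto
  show ?thesis
    using sinkhorn_eq[OF _ p2 dsD sc2 zD] sinkhorn_eq[OF _ p3 dsD sc3 zD] unfolding D_def by simp
qed

end
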